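(* Let $V_1,V_2$ be finite-dimensional real vector spaces, $G_1\subset\mathrm{GL}(V_1)$, $G_2\subset\mathrm{GL}(V_2)$ Lie subgroups, $\mathcal{P}$ a monoid, and $\rho_i:\mathcal{P}\to G_i$ ($i=1,2$) monoid homomorphisms; let $H_i$ be the closure in $G_i$ of the subgroup generated by $\rho_i(\mathcal{P})$. Let $f:V_1\to V_2$ be a linear map with $\rho_2(\gamma)\circ f=f\circ\rho_1(\gamma)$ for all $\gamma\in\mathcal{P}$. Assume $G_1$ is compact. Then for every $h_2\in H_2$ there exists $h_1\in H_1$ such that $f\circ h_1=h_2\circ f$. *)

theory Defs
  imports "HOL-Analysis.Analysis"
begin

text \<open>Linear maps of a finite-dimensional real vector space are modelled as bounded
  linear functions (every linear map is bounded in finite dimension); the space of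
  such maps carries its natural (operator-norm) topology.\<close>

definition GL :: "('a::euclidean_space \<Rightarrow>\<^sub>L 'a) set" where
  "GL = {g. \<exists>h. g o\<^sub>L h = id_blinfun \<and> h o\<^sub>L g = id_blinfun}"

definition subgroup_GL :: "('a::euclidean_space \<Rightarrow>\<^sub>L 'a) set \<Rightarrow> bool" where
  "subgroup_GL K \<longleftrightarrow> K \<subseteq> GL \<and> id_blinfun \<in> K
     \<and> (\<forall>g\<in>K. \<forall>h\<in>K. g o\<^sub>L h \<in> K)
     \<and> (\<forall>g\<in>K. \<exists>h\<in>K. g o\<^sub>L h = id_blinfun \<and> h o\<^sub>L g = id_blinfun)"

definition generated_subgroup_GL :: "('a::euclidean_space \<Rightarrow>\<^sub>L 'a) set \<Rightarrow> ('a \<Rightarrow>\<^sub>L 'a) set" where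
  "generated_subgroup_GL S = \<Inter>{K. subgroup_GL K \<and> S \<subseteq> K}"

definition monoid_hom_GL :: "('p::monoid_mult \<Rightarrow> ('a::euclidean_space \<Rightarrow>\<^sub>L 'a)) \<Rightarrow> bool" where
  "monoid_hom_GL \<rho> \<longleftrightarrow> \<rho> 1 = id_blinfun \<and> (\<forall>x y. \<rho> (x * y) = \<rho> x o\<^sub>L \<rho> y)"

definition closure_generated_in :: "('a::euclidean_space \<Rightarrow>\<^sub>L 'a) set \<Rightarrow> ('p \<Rightarrow> ('a \<Rightarrow>\<^sub>L 'a)) \<Rightarrow> ('a \<Rightarrow>\<^sub>L 'a) set" where
  "closure_generated_in G \<rho> = G \<inter> closure (generated_subgroup_GL (range \<rho>))"

end

theory Submission
  imports Defs
begin

lemma cL_assoc: "(a o\<^sub>L b) o\<^sub>L c = a o\<^sub>L (b o\<^sub>L c)"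
  by (rule blinfun_eqI) simp

lemma cL_id1[simp]: "id_blinfun o\<^sub>L a = a"
  by (rule blinfun_eqI) simp

lemma cL_id2[simp]: "a o\<^sub>L id_blinfun = a"
  by (rule blinfun_eqI) simp

lemma inv_unique:
  assumes "g o\<^sub>L h = id_blinfun" "h' o\<^sub>L g = id_blinfun"
  shows "h = h'"
proof -
  have "h = (h' o\<^sub>L g) o\<^sub>L h" using assms by simp
  also have "\<dots> = h' o\<^sub>L (g o\<^sub>L h)" by (rule cL_assoc)
  also have "\<dots> = h'" using assms by simp
  finally show ?thesis .
qed

lemma gen_sub:
  assumes "subgroup_GL G" "S \<subseteq> G"
  shows "subgroup_GL (generated_subgroup_GL S)" "S \<subseteq> generated_subgroup_GL S"
    "generated_subgroup_GL S \<subseteq> G"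
proof -
  let ?F = "{K. subgroup_GL K \<and> S \<subseteq> K}"
  have GF: "G \<in> ?F" using assms by auto
  show sub: "generated_subgroup_GL S \<subseteq> G" unfolding generated_subgroup_GL_def using GF by blast
  show "S \<subseteq> generated_subgroup_GL S" unfolding generated_subgroup_GL_def by blast
  have inv: "\<exists>h\<in>\<Inter>?F. g o\<^sub>L h = id_blinfun \<and> h o\<^sub>L g = id_blinfun" if g: "g \<in> \<Inter>?F" for g
  proof -
    from g GF have "g \<in> G" by blast
    with assms(1) obtain h where h: "h \<in> G" "g o\<^sub>L h = id_blinfun" "h o\<^sub>L g = id_blinfun"
      unfolding subgroup_GL_def by blast
    have "h \<in> K" if "K \<in> ?F" for K
    proof -
      from that g have "g \<in> K" "subgroup_GL K" by auto
      then obtain h' where "h' \<in> K" "g o\<^sub>L h' = id_blinfun" "h' o\<^sub>L g = id_blinfun"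
        unfolding subgroup_GL_def by blast
      moreover have "h' = h" using inv_unique[of g h' h] calculation h by blast
      ultimately show ?thesis by simp
    qed
    then show ?thesis using h by blast
  qed
  show "subgroup_GL (generated_subgroup_GL S)"
    unfolding generated_subgroup_GL_def subgroup_GL_def[of "\<Inter>?F"]
  proof (intro conjI)
    show "\<Inter>?F \<subseteq> GL" using GF assms(1) unfolding subgroup_GL_def by blast
    show "id_blinfun \<in> \<Inter>?F" unfolding subgroup_GL_def by blast
    show "\<forall>g\<in>\<Inter>?F. \<forall>h\<in>\<Inter>?F. g o\<^sub>L h \<in> \<Inter>?F" unfolding subgroup_GL_def by blast
    show "\<forall>g\<in>\<Inter>?F. \<exists>h\<in>\<Inter>?F. g o\<^sub>L h = id_blinfun \<and> h o\<^sub>L g = id_blinfun"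
      using inv by blast
  qed
qed

theorem proposition4p16:
  fixes G1 :: "('a::euclidean_space \<Rightarrow>\<^sub>L 'a) set"
    and G2 :: "('b::euclidean_space \<Rightarrow>\<^sub>L 'b) set"
    and \<rho>1 :: "'p::monoid_mult \<Rightarrow> ('a \<Rightarrow>\<^sub>L 'a)"
    and \<rho>2 :: "'p \<Rightarrow> ('b \<Rightarrow>\<^sub>L 'b)"
    and f :: "'a \<Rightarrow>\<^sub>L 'b"
  assumes "subgroup_GL G1" and "subgroup_GL G2"
    and "compact G1"
    and "monoid_hom_GL \<rho>1" and "monoid_hom_GL \<rho>2"
    and "range \<rho>1 \<subseteq> G1" and "range \<rho>2 \<subseteq> G2"
    and "\<And>\<gamma>. \<rho>2 \<gamma> o\<^sub>L f = f o\<^sub>L \<rho>1 \<gamma>"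
  shows "\<forall>h2 \<in> closure_generated_in G2 \<rho>2. \<exists>h1 \<in> closure_generated_in G1 \<rho>1.
           f o\<^sub>L h1 = h2 o\<^sub>L f"
proof
  fix h2 assume h2: "h2 \<in> closure_generated_in G2 \<rho>2"
  define S1 where "S1 = generated_subgroup_GL (range \<rho>1)"
  define S2 where "S2 = generated_subgroup_GL (range \<rho>2)"
  note g1 = gen_sub[OF assms(1) assms(6), folded S1_def]
  note g2 = gen_sub[OF assms(2) assms(7), folded S2_def]
  define K where "K = {b. b \<in> GL \<and> (\<exists>a\<in>S1. b o\<^sub>L f = f o\<^sub>L a)}"
  have "subgroup_GL K" unfolding subgroup_GL_def
  proof (intro conjI)
    show "K \<subseteq> GL" unfolding K_def by blast
    have "id_blinfun \<in> S1" using g1(1) unfolding subgroup_GL_def by blast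
    moreover have "id_blinfun \<in> (GL :: ('b \<Rightarrow>\<^sub>L 'b) set)" unfolding GL_def
      by (rule CollectI, rule exI[of _ id_blinfun]) simp
    ultimately show "id_blinfun \<in> K" unfolding K_def by force
    show "\<forall>g\<in>K. \<forall>h\<in>K. g o\<^sub>L h \<in> K"
    proof (intro ballI)
      fix g h assume "g \<in> K" "h \<in> K"
      then obtain a1 a2 where a: "a1 \<in> S1" "a2 \<in> S1" "g o\<^sub>L f = f o\<^sub>L a1" "h o\<^sub>L f = f o\<^sub>L a2"
        "g \<in> GL" "h \<in> GL" unfolding K_def by blast
      have "a1 o\<^sub>L a2 \<in> S1" using g1(1) a unfolding subgroup_GL_def by blast
      moreover have "(g o\<^sub>L h) o\<^sub>L f = f o\<^sub>L (a1 o\<^sub>L a2)"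
        using a by (metis cL_assoc)
      moreover have "g o\<^sub>L h \<in> GL"
      proof -
        obtain gi where "g o\<^sub>L gi = id_blinfun" "gi o\<^sub>L g = id_blinfun" using a(5) unfolding GL_def by blast
        moreover obtain hi where "h o\<^sub>L hi = id_blinfun" "hi o\<^sub>L h = id_blinfun" using a(6) unfolding GL_def by blast
        ultimately have "(g o\<^sub>L h) o\<^sub>L (hi o\<^sub>L gi) = id_blinfun" "(hi o\<^sub>L gi) o\<^sub>L (g o\<^sub>L h) = id_blinfun"
          by (metis cL_assoc cL_id1)+
        then show ?thesis unfolding GL_def by blast
      qed
      ultimately show "g o\<^sub>L h \<in> K" unfolding K_def by blast
    qed
    show "\<forall>g\<in>K. \<exists>h\<in>K. g o\<^sub>L h = id_blinfun \<and> h o\<^sub>L g = id_blinfun"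
    proof
      fix g assume "g \<in> K"
      then obtain a where a: "a \<in> S1" "g o\<^sub>L f = f o\<^sub>L a" "g \<in> GL" unfolding K_def by blast
      obtain gi where gi: "g o\<^sub>L gi = id_blinfun" "gi o\<^sub>L g = id_blinfun" using a(3) unfolding GL_def by blast
      obtain ai where ai: "ai \<in> S1" "a o\<^sub>L ai = id_blinfun" "ai o\<^sub>L a = id_blinfun"
        using g1(1) a(1) unfolding subgroup_GL_def by blast
      have "gi o\<^sub>L f = gi o\<^sub>L f o\<^sub>L (a o\<^sub>L ai)" using ai by simp
      also have "\<dots> = gi o\<^sub>L (g o\<^sub>L f) o\<^sub>L ai" using a(2) by (simp add: cL_assoc)
      also have "\<dots> = f o\<^sub>L ai" using gi by (metis cL_assoc cL_id1)
      finally have "gi o\<^sub>L f = f o\<^sub>L ai" .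
      moreover have "gi \<in> GL" using gi unfolding GL_def by blast
      ultimately have "gi \<in> K" using ai unfolding K_def by blast
      then show "\<exists>h\<in>K. g o\<^sub>L h = id_blinfun \<and> h o\<^sub>L g = id_blinfun" using gi by blast
    qed
  qed
  moreover have "range \<rho>2 \<subseteq> K"
  proof
    fix b assume "b \<in> range \<rho>2"
    then obtain \<gamma> where "b = \<rho>2 \<gamma>" by blast
    moreover have "\<rho>1 \<gamma> \<in> S1" using g1(2) by blast
    moreover have "\<rho>2 \<gamma> \<in> GL" using assms(2,7) unfolding subgroup_GL_def by blast
    ultimately show "b \<in> K" unfolding K_def using assms(8) by blast
  qed
  ultimately have S2K: "S2 \<subseteq> K" unfolding S2_def generated_subgroup_GL_def by blast
  from h2 have "h2 \<in> closure S2" "h2 \<in> G2" unfolding closure_generated_in_def S2_def by auto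
  then obtain b where b: "\<And>n. b n \<in> S2" "b \<longlonglongrightarrow> h2" unfolding closure_sequential by blast
  have "\<forall>n. \<exists>a. a \<in> S1 \<and> b n o\<^sub>L f = f o\<^sub>L a" using b(1) S2K unfolding K_def by blast
  then obtain a where a: "\<And>n. a n \<in> S1" "\<And>n. b n o\<^sub>L f = f o\<^sub>L a n" by metis
  have "\<forall>n. a n \<in> G1" using a(1) g1(3) by blast
  from seq_compactE[OF compact_imp_seq_compact[OF assms(3)] this]
  obtain l r where lr: "l \<in> G1" "strict_mono r" "(a \<circ> r) \<longlonglongrightarrow> l" by blast
  have "l \<in> closure S1" unfolding closure_sequential using lr(3) a(1) by (intro exI[of _ "a \<circ> r"]) auto
  with lr(1) have "l \<in> closure_generated_in G1 \<rho>1" unfolding closure_generated_in_def S1_def by blast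
  moreover have "f o\<^sub>L l = h2 o\<^sub>L f"
  proof (rule LIMSEQ_unique)
    show "(\<lambda>n. f o\<^sub>L (a \<circ> r) n) \<longlonglongrightarrow> (f o\<^sub>L l)"
      by (intro bounded_bilinear.tendsto[OF bounded_bilinear_blinfun_compose] tendsto_const lr(3))
    have "(b \<circ> r) \<longlonglongrightarrow> h2" using b(2) lr(2) by (rule LIMSEQ_subseq_LIMSEQ)
    then have "(\<lambda>n. (b \<circ> r) n o\<^sub>L f) \<longlonglongrightarrow> (h2 o\<^sub>L f)"
      by (intro bounded_bilinear.tendsto[OF bounded_bilinear_blinfun_compose] tendsto_const)
    then show "(\<lambda>n. f o\<^sub>L (a \<circ> r) n) \<longlonglongrightarrow> (h2 o\<^sub>L f)" using a(2) by simp
  qed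
  ultimately show "\<exists>h1 \<in> closure_generated_in G1 \<rho>1. f o\<^sub>L h1 = h2 o\<^sub>L f" by blast
qed

end
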